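(* Let $(\varphi_t)_{t\ge0}$ be a family of nonnegative measures on $\mathcal B(\mathbb R_+)$ satisfying $$\forall t\ge0,\ \forall A\in\mathcal B(\mathbb R_+),\ \forall\varepsilon>0,\ \exists\eta\in(0,1):\ |z|,|z'|<\eta\Rightarrow|\varphi_{t+z}(A+z')-\varphi_t(A+z')|<\varepsilon .$$ Then: (1) for almost every $t\ge0$ and all $0\le s<r$, $$\lim_{\Delta t\searrow0}\frac1{\Delta t}\int_0^{\Delta t}\big|\varphi_{t+\Delta t-u}((s+u,r+u])-\varphi_t((s+u,r+u])\big|\,du=0;$$ (2) for almost every $t\ge0$ and all $0\le s<r$, $$\lim_{\Delta t\searrow0}\frac1{\Delta t}\int_0^{\Delta t}\varphi_{t+\Delta t-u}((s+u,r+u])\,du=\varphi_t((s,r]).$$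
   Context: $A+z'$ denotes the translate $\{a+z':a\in A\}$. *)

theory Defs
  imports "HOL-Analysis.Analysis"
begin

abbreviation borel_nonneg :: "real measure" where
  "borel_nonneg \<equiv> restrict_space borel {0..}"

definition translate :: "real set \<Rightarrow> real \<Rightarrow> real set" where
  "translate A z' = (\<lambda>a. a + z') ` A"

end

theory Submission
  imports Defs
begin


lemma intv_sets:
  assumes "sets M = sets borel_nonneg" "0 \<le> a"
  shows "{a<..b} \<in> sets M"
proof -
  have "{a<..b} = {0..} \<inter> {a<..b}" using assms(2) by auto
  then show ?thesis using assms(1) by (simp add: sets_restrict_space)
qed

lemma L1:
  assumes fm: "finite_measure M" and S: "sets M = sets borel_nonneg" and a: "0 \<le> a"
  shows "((\<lambda>v. measure M {a<..c+v}) \<longlongrightarrow> measure M {a<..c}) (at_right 0)"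
proof (rule tendsto_at_right_sequentially[where b=1])
  fix f :: "nat \<Rightarrow> real" assume f: "\<And>n. 0 < f n" "decseq f" "f \<longlonglongrightarrow> 0"
  have "(\<lambda>n. measure M {a<..c + f n}) \<longlonglongrightarrow> measure M (\<Inter>i. {a<..c + f i})"
    using f(2) intv_sets[OF S a]
    by (intro finite_measure.finite_Lim_measure_decseq[OF fm]) (auto simp: decseq_def, meson add_le_cancel_left order.trans)
  also have "(\<Inter>i. {a<..c + f i}) = {a<..c}"
  proof (intro equalityI subsetI)
    fix x assume "x \<in> (\<Inter>i. {a<..c + f i})"
    then have h: "\<And>i. x \<le> c + f i" "a < x" by auto
    then have hh: "\<forall>i. x - c \<le> f i" by (simp add: algebra_simps)
    have "x - c \<le> 0" by (rule LIMSEQ_le_const[OF f(3)]) (use hh in blast)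
    then show "x \<in> {a<..c}" using h by auto
  next
    fix x assume "x \<in> {a<..c}" then show "x \<in> (\<Inter>i. {a<..c + f i})" using f(1) by (auto, smt (verit) f(1))
  qed
  finally show "(\<lambda>n. measure M {a<..c + f n}) \<longlonglongrightarrow> measure M {a<..c}" .
qed simp

lemma L:
  assumes fm: "finite_measure M" and S: "sets M = sets borel_nonneg" and a: "0 \<le> a" and ab: "a \<le> b"
  shows "((\<lambda>v. measure M {a+v<..b+v}) \<longlongrightarrow> measure M {a<..b}) (at_right 0)"
proof -
  have "((\<lambda>v. measure M {a<..b+v} - measure M {a<..a+v}) \<longlongrightarrow> measure M {a<..b} - measure M {a<..a}) (at_right 0)"
    by (intro tendsto_diff L1 assms)
  then have *: "((\<lambda>v. measure M {a<..b+v} - measure M {a<..a+v}) \<longlongrightarrow> measure M {a<..b}) (at_right 0)" by simp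
  have "eventually (\<lambda>v. measure M {a<..b+v} - measure M {a<..a+v} = measure M {a+v<..b+v}) (at_right (0::real))"
  proof (rule eventually_at_right_less[THEN eventually_mono])
    fix v :: real assume v: "0 < v"
    have "measure M ({a<..b+v} - {a<..a+v}) = measure M {a<..b+v} - measure M {a<..a+v}"
      using v ab intv_sets[OF S a] by (intro finite_measure.finite_measure_Diff[OF fm]) auto
    moreover have "{a<..b+v} - {a<..a+v} = {a+v<..b+v}" using v ab by auto
    ultimately show "measure M {a<..b+v} - measure M {a<..a+v} = measure M {a+v<..b+v}" by simp
  qed
  then show ?thesis using * by (rule Lim_transform_eventually[rotated])
qed

lemma ein0[simp]: "einterval 0 (ereal d) = {0<..<d}"
  by (metis einterval_eq_Icc zero_ereal_def)

lemma G:
  fixes f :: "real \<Rightarrow> real"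
  assumes d: "0 < d" and int: "interval_lebesgue_integrable lborel 0 d f"
    and b: "\<And>u. 0 < u \<Longrightarrow> u < d \<Longrightarrow> \<bar>f u - c\<bar> \<le> e"
  shows "\<bar>(1/d) * (LBINT u=0..d. f u) - c\<bar> \<le> e"
proof -
  have si: "set_integrable lborel {0<..<d} f"
    using int d by (simp add: interval_lebesgue_integrable_def)
  have sc: "set_integrable lborel {0<..<d} (\<lambda>_. c)" for c :: real
    using interval_integral_const(1)[of 0 d c] d by (simp add: interval_lebesgue_integrable_def)
  have eqf: "(LBINT u=0..d. f u) = (LINT u:{0<..<d}|lborel. f u)"
    using d by (simp add: interval_lebesgue_integral_def)
  have cst: "(LINT u:{0<..<d}|lborel. c) = c * d" for c :: real
    using d by (subst set_integral_const) auto
  have sd: "set_integrable lborel {0<..<d} (\<lambda>u. f u - c)" using si sc by auto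
  have "(LINT u:{0<..<d}|lborel. f u - c) = (LINT u:{0<..<d}|lborel. f u) - c * d"
    using si sc cst by (simp add: set_integral_diff)
  moreover have "\<bar>LINT u:{0<..<d}|lborel. f u - c\<bar> \<le> (LINT u:{0<..<d}|lborel. \<bar>f u - c\<bar>)"
    using set_integral_norm_bound[OF sd] by simp
  moreover have "(LINT u:{0<..<d}|lborel. \<bar>f u - c\<bar>) \<le> (LINT u:{0<..<d}|lborel. e)"
    by (rule set_integral_mono) (use sd sc b in \<open>auto intro: set_integrable_abs\<close>)
  ultimately have "\<bar>(LBINT u=0..d. f u) - c * d\<bar> \<le> e * d" using eqf cst by simp
  then have "\<bar>((LBINT u=0..d. f u) - c * d) / d\<bar> \<le> e" using d by (simp add: field_simps)
  moreover have "((LBINT u=0..d. f u) - c * d) / d = (1/d) * (LBINT u=0..d. f u) - c"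
    using d by (simp add: field_simps)
  ultimately show ?thesis by simp
qed

lemma G0:
  fixes f :: "real \<Rightarrow> real"
  assumes d: "0 < d" and e: "0 \<le> e"
    and b: "\<And>u. 0 < u \<Longrightarrow> u < d \<Longrightarrow> \<bar>f u\<bar> \<le> e"
  shows "\<bar>(1/d) * (LBINT u=0..d. f u)\<bar> \<le> e"
proof (cases "interval_lebesgue_integrable lborel 0 d f")
  case True
  then show ?thesis using G[OF d True, of 0 e] b by simp
next
  case False
  then have "(LBINT u=0..d. f u) = 0"
    using d by (simp add: interval_lebesgue_integral_def interval_lebesgue_integrable_def
        set_lebesgue_integral_def set_integrable_def not_integrable_integral_eq)
  then show ?thesis using e by simp
qed

lemma ceil_near:
  fixes u :: real
  shows "u \<le> real_of_int \<lceil>real (Suc n) * u\<rceil> / real (Suc n)"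
    and "real_of_int \<lceil>real (Suc n) * u\<rceil> / real (Suc n) < u + 1 / real (Suc n)"
proof -
  have p: "0 < real (Suc n)" by simp
  have a: "real (Suc n) * u \<le> real_of_int \<lceil>real (Suc n) * u\<rceil>" by (rule le_of_int_ceiling)
  have b: "real_of_int \<lceil>real (Suc n) * u\<rceil> < real (Suc n) * u + 1" using ceiling_correct[of "real (Suc n) * u"] by linarith
  show "u \<le> real_of_int \<lceil>real (Suc n) * u\<rceil> / real (Suc n)" using a p by (simp add: field_simps)
  show "real_of_int \<lceil>real (Suc n) * u\<rceil> / real (Suc n) < u + 1 / real (Suc n)"
  proof -
    have "(u + 1 / real (Suc n)) * real (Suc n) = real (Suc n) * u + 1" using p by (simp add: field_simps)
    then show ?thesis using b p by (simp add: divide_less_eq)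
  qed
qed

lemma rc_meas:
  fixes h :: "real \<Rightarrow> real"
  assumes rc: "\<And>u \<epsilon>. 0 < u \<Longrightarrow> u < d \<Longrightarrow> \<epsilon> > 0 \<Longrightarrow> \<exists>\<delta>>0. \<forall>v. u \<le> v \<and> v < u + \<delta> \<longrightarrow> \<bar>h v - h u\<bar> < \<epsilon>"
  shows "(\<lambda>u. indicator {0<..<d} u * h u) \<in> borel_measurable lborel"
proof (rule borel_measurable_LIMSEQ_real)
  fix n
  have c: "(\<lambda>u. \<lceil>real (Suc n) * u\<rceil>) \<in> measurable lborel (count_space UNIV)" by measurable
  show "(\<lambda>u. indicator {0<..<d} u * h (real_of_int \<lceil>real (Suc n) * u\<rceil> / real (Suc n))) \<in> borel_measurable lborel"
    by (rule measurable_compose_countable'[where f="\<lambda>k u. indicator {0<..<d} u * h (real_of_int k / real (Suc n))", OF _ c]) auto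
next
  fix u :: real
  show "(\<lambda>n. indicator {0<..<d} u * h (real_of_int \<lceil>real (Suc n) * u\<rceil> / real (Suc n))) \<longlonglongrightarrow> indicator {0<..<d} u * h u"
  proof (cases "u \<in> {0<..<d}")
    case False then show ?thesis by simp
  next
    case True
    have "(\<lambda>n. h (real_of_int \<lceil>real (Suc n) * u\<rceil> / real (Suc n))) \<longlonglongrightarrow> h u"
    proof (rule LIMSEQ_I)
      fix r :: real assume r: "0 < r"
      obtain \<delta> where dl: "\<delta> > 0" "\<forall>v. u \<le> v \<and> v < u + \<delta> \<longrightarrow> \<bar>h v - h u\<bar> < r"
        using rc[of u r] True r by auto
      obtain N :: nat where N: "1 / real (Suc N) < \<delta>" using dl(1) by (meson nat_approx_posE)
      show "\<exists>no. \<forall>n\<ge>no. norm (h (real_of_int \<lceil>real (Suc n) * u\<rceil> / real (Suc n)) - h u) < r"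
      proof (intro exI allI impI)
        fix n assume n: "N \<le> n"
        have "1 / real (Suc n) \<le> 1 / real (Suc N)" using n by (simp add: frac_le)
        then show "norm (h (real_of_int \<lceil>real (Suc n) * u\<rceil> / real (Suc n)) - h u) < r"
          using dl(2) ceil_near[where u=u and n=n] N by force
      qed
    qed
    then show ?thesis using True by simp
  qed
qed

lemma translate_Ioc: "translate {a<..b} z = {a+z<..b+z}"
  unfolding translate_def
proof (intro equalityI subsetI)
  fix x assume "x \<in> {a+z<..b+z}" then show "x \<in> (\<lambda>y. y + z) ` {a<..b}"
    by (intro image_eqI[of _ _ "x - z"]) auto
qed auto

lemma at_right_epsI:
  fixes F :: "real \<Rightarrow> real"
  assumes "\<And>e. e > 0 \<Longrightarrow> \<exists>b>0. \<forall>d. 0 < d \<and> d < b \<longrightarrow> \<bar>F d - c\<bar> < e"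
  shows "(F \<longlongrightarrow> c) (at_right 0)"
  unfolding tendsto_iff eventually_at_right_field dist_real_def using assms by (meson greaterThan_iff)

lemma at_right_epsD:
  fixes F :: "real \<Rightarrow> real"
  assumes "(F \<longlongrightarrow> c) (at_right 0)" "e > 0"
  shows "\<exists>b>0. \<forall>d. 0 < d \<and> d < b \<longrightarrow> \<bar>F d - c\<bar> < e"
  using assms unfolding tendsto_iff eventually_at_right_field dist_real_def by (meson greaterThan_iff)

context
  fixes \<phi> :: "real \<Rightarrow> real measure"
  assumes meas: "\<And>t. t \<ge> 0 \<Longrightarrow> sets (\<phi> t) = sets borel_nonneg"
    and fin: "\<And>t. t \<ge> 0 \<Longrightarrow> finite_measure (\<phi> t)"
    and cont: "\<And>t A \<epsilon>. t \<ge> 0 \<Longrightarrow> A \<in> sets borel_nonneg \<Longrightarrow> \<epsilon> > 0 \<Longrightarrow>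
      \<exists>\<eta>. 0 < \<eta> \<and> \<eta> < 1 \<and>
        (\<forall>z z'. \<bar>z\<bar> < \<eta> \<and> \<bar>z'\<bar> < \<eta> \<and> t + z \<ge> 0 \<longrightarrow>
           \<bar>measure (\<phi> (t + z)) (translate A z' \<inter> {0..})
             - measure (\<phi> t) (translate A z' \<inter> {0..})\<bar> < \<epsilon>)"
begin

lemma contI:
  assumes t: "t \<ge> 0" and a: "0 \<le> a" and e: "e > 0"
  shows "\<exists>\<eta>>0. \<forall>z z'. \<bar>z\<bar> < \<eta> \<and> \<bar>z'\<bar> < \<eta> \<and> t + z \<ge> 0 \<and> a + z' \<ge> 0 \<longrightarrow>
           \<bar>measure (\<phi> (t + z)) {a+z'<..b+z'} - measure (\<phi> t) {a+z'<..b+z'}\<bar> < e"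
proof -
  have "{a<..b} \<in> sets borel_nonneg" using intv_sets[of borel_nonneg a b] a by simp
  from cont[OF t this e] obtain \<eta> where \<eta>: "0 < \<eta>" "(\<forall>z z'. \<bar>z\<bar> < \<eta> \<and> \<bar>z'\<bar> < \<eta> \<and> t + z \<ge> 0 \<longrightarrow>
           \<bar>measure (\<phi> (t + z)) (translate {a<..b} z' \<inter> {0..})
             - measure (\<phi> t) (translate {a<..b} z' \<inter> {0..})\<bar> < e)" by blast
  have "translate {a<..b} z' \<inter> {0..} = {a+z'<..b+z'}" if "a + z' \<ge> 0" for z'
    using that by (auto simp: translate_Ioc)
  then show ?thesis using \<eta> by (intro exI[of _ \<eta>]) metis
qed

lemma part1:
  assumes t: "t \<ge> 0" and s: "0 \<le> s"
  shows "((\<lambda>d. (1 / d) * (LBINT u=0..d.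
                \<bar>measure (\<phi> (t + d - u)) {s + u<..r + u} - measure (\<phi> t) {s + u<..r + u}\<bar>))
              \<longlongrightarrow> 0) (at_right 0)"
proof (rule at_right_epsI)
  fix e :: real assume e: "e > 0"
  obtain \<eta> where \<eta>: "\<eta> > 0" "\<forall>z z'. \<bar>z\<bar> < \<eta> \<and> \<bar>z'\<bar> < \<eta> \<and> t + z \<ge> 0 \<and> s + z' \<ge> 0 \<longrightarrow>
           \<bar>measure (\<phi> (t + z)) {s+z'<..r+z'} - measure (\<phi> t) {s+z'<..r+z'}\<bar> < e/2"
    using contI[OF t s, of "e/2" r] e by auto
  show "\<exists>b>0. \<forall>d. 0 < d \<and> d < b \<longrightarrow> \<bar>(1 / d) * (LBINT u=0..d.
                \<bar>measure (\<phi> (t + d - u)) {s + u<..r + u} - measure (\<phi> t) {s + u<..r + u}\<bar>) - 0\<bar> < e"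
  proof (intro exI[of _ \<eta>] conjI allI impI)
    fix d assume d: "0 < d \<and> d < \<eta>"
    have "\<bar>(1 / d) * (LBINT u=0..d.
                \<bar>measure (\<phi> (t + d - u)) {s + u<..r + u} - measure (\<phi> t) {s + u<..r + u}\<bar>)\<bar> \<le> e/2"
    proof (rule G0)
      fix u assume u: "0 < u" "u < d"
      have "\<bar>measure (\<phi> (t + (d - u))) {s+u<..r+u} - measure (\<phi> t) {s+u<..r+u}\<bar> < e/2"
        using \<eta>(2)[rule_format, of "d - u" u] u d t s by auto
      then show "\<bar>\<bar>measure (\<phi> (t + d - u)) {s + u<..r + u} - measure (\<phi> t) {s + u<..r + u}\<bar>\<bar> \<le> e/2"
        by (simp add: add_diff_eq)
    qed (use d e in auto)
    then show "\<bar>(1 / d) * (LBINT u=0..d.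
                \<bar>measure (\<phi> (t + d - u)) {s + u<..r + u} - measure (\<phi> t) {s + u<..r + u}\<bar>) - 0\<bar> < e"
      using e by (simp only: diff_zero)
  qed (use \<eta> in auto)
qed

lemma rcont:
  assumes t: "t \<ge> 0" and s: "0 \<le> s" and sr: "s \<le> r" and u0: "0 < u0" "u0 < d" and e: "e > 0"
  shows "\<exists>\<delta>>0. \<forall>v. u0 \<le> v \<and> v < u0 + \<delta> \<longrightarrow>
     \<bar>measure (\<phi> (t + d - v)) {s + v<..r + v} - measure (\<phi> (t + d - u0)) {s + u0<..r + u0}\<bar> < e"
proof -
  define t' where "t' = t + d - u0"
  have t': "t' \<ge> 0" using t u0 by (simp add: t'_def)
  have su: "0 \<le> s + u0" using s u0 by simp
  obtain \<eta>3 where \<eta>3: "\<eta>3 > 0" "\<forall>z z'. \<bar>z\<bar> < \<eta>3 \<and> \<bar>z'\<bar> < \<eta>3 \<and> t' + z \<ge> 0 \<and> (s + u0) + z' \<ge> 0 \<longrightarrow>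
           \<bar>measure (\<phi> (t' + z)) {(s+u0)+z'<..(r+u0)+z'} - measure (\<phi> t') {(s+u0)+z'<..(r+u0)+z'}\<bar> < e/2"
    using contI[OF t' su, of "e/2" "r+u0"] e by auto
  have "((\<lambda>v. measure (\<phi> t') {(s+u0)+v<..(r+u0)+v}) \<longlongrightarrow> measure (\<phi> t') {s+u0<..r+u0}) (at_right 0)"
    using L[OF fin[OF t'] meas[OF t'] su] sr by simp
  from at_right_epsD[OF this, of "e/2"] e obtain \<eta>4 where \<eta>4: "\<eta>4 > 0"
    "\<forall>v. 0 < v \<and> v < \<eta>4 \<longrightarrow> \<bar>measure (\<phi> t') {(s+u0)+v<..(r+u0)+v} - measure (\<phi> t') {s+u0<..r+u0}\<bar> < e/2"
    by auto
  show ?thesis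
  proof (intro exI[of _ "min (min \<eta>3 \<eta>4) (d - u0)"] conjI allI impI)
    show "0 < min (min \<eta>3 \<eta>4) (d - u0)" using \<eta>3 \<eta>4 u0 by simp
    fix v assume v: "u0 \<le> v \<and> v < u0 + min (min \<eta>3 \<eta>4) (d - u0)"
    show "\<bar>measure (\<phi> (t + d - v)) {s + v<..r + v} - measure (\<phi> (t + d - u0)) {s + u0<..r + u0}\<bar> < e"
    proof (cases "v = u0")
      case True then show ?thesis using e by simp
    next
      case False
      define w where "w = v - u0"
      have w: "0 < w" "w < \<eta>3" "w < \<eta>4" "w < d - u0" using v False by (auto simp: w_def)
      have eq1: "t' + - w = t + d - v" "(s+u0)+w = s + v" "(r+u0)+w = r + v"
        by (auto simp: t'_def w_def)
      have A0: "\<bar>measure (\<phi> (t' + - w)) {(s+u0)+w<..(r+u0)+w} - measure (\<phi> t') {(s+u0)+w<..(r+u0)+w}\<bar> < e/2"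
        by (rule \<eta>3(2)[rule_format]) (use w t su in \<open>auto simp: t'_def\<close>)
      have A: "\<bar>measure (\<phi> (t + d - v)) {s + v<..r + v} - measure (\<phi> t') {s + v<..r + v}\<bar> < e/2"
        using A0 unfolding eq1 .
      have B0: "\<bar>measure (\<phi> t') {(s+u0)+w<..(r+u0)+w} - measure (\<phi> t') {s+u0<..r+u0}\<bar> < e/2"
        using \<eta>4(2) w by auto
      have B: "\<bar>measure (\<phi> t') {s + v<..r + v} - measure (\<phi> t') {s+u0<..r+u0}\<bar> < e/2"
        using B0 unfolding eq1 .
      show ?thesis using A B unfolding t'_def by linarith
    qed
  qed
qed

lemma part2:
  assumes t: "t \<ge> 0" and s: "0 \<le> s" and sr: "s \<le> r"
  shows "((\<lambda>d. (1 / d) * (LBINT u=0..d. measure (\<phi> (t + d - u)) {s + u<..r + u}))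
              \<longlongrightarrow> measure (\<phi> t) {s<..r}) (at_right 0)"
proof (rule at_right_epsI)
  fix e :: real assume e: "e > 0"
  obtain \<eta>1 where \<eta>1: "\<eta>1 > 0" "\<forall>z z'. \<bar>z\<bar> < \<eta>1 \<and> \<bar>z'\<bar> < \<eta>1 \<and> t + z \<ge> 0 \<and> s + z' \<ge> 0 \<longrightarrow>
           \<bar>measure (\<phi> (t + z)) {s+z'<..r+z'} - measure (\<phi> t) {s+z'<..r+z'}\<bar> < e/4"
    using contI[OF t s, of "e/4" r] e by auto
  from at_right_epsD[OF L[OF fin[OF t] meas[OF t] s sr], of "e/4"] e obtain \<eta>2 where \<eta>2: "\<eta>2 > 0"
    "\<forall>v. 0 < v \<and> v < \<eta>2 \<longrightarrow> \<bar>measure (\<phi> t) {s+v<..r+v} - measure (\<phi> t) {s<..r}\<bar> < e/4"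
    by auto
  show "\<exists>b>0. \<forall>d. 0 < d \<and> d < b \<longrightarrow> \<bar>(1 / d) * (LBINT u=0..d. measure (\<phi> (t + d - u)) {s + u<..r + u}) - measure (\<phi> t) {s<..r}\<bar> < e"
  proof (intro exI[of _ "min \<eta>1 \<eta>2"] conjI allI impI)
    show "0 < min \<eta>1 \<eta>2" using \<eta>1 \<eta>2 by simp
    fix d assume d: "0 < d \<and> d < min \<eta>1 \<eta>2"
    define h where "h u = measure (\<phi> (t + d - u)) {s + u<..r + u}" for u
    define c where "c = measure (\<phi> t) {s<..r}"
    have bnd: "\<bar>h u - c\<bar> \<le> e/2" if u: "0 < u" "u < d" for u
    proof -
      have "\<bar>measure (\<phi> (t + (d - u))) {s+u<..r+u} - measure (\<phi> t) {s+u<..r+u}\<bar> < e/4"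
        using \<eta>1(2)[rule_format, of "d - u" u] u d t s by auto
      then have "\<bar>measure (\<phi> (t + d - u)) {s+u<..r+u} - measure (\<phi> t) {s+u<..r+u}\<bar> < e/4"
        by (simp add: add_diff_eq)
      moreover have "\<bar>measure (\<phi> t) {s+u<..r+u} - measure (\<phi> t) {s<..r}\<bar> < e/4"
        using \<eta>2(2) u d by auto
      ultimately show ?thesis unfolding h_def c_def by linarith
    qed
    have mb: "(\<lambda>u. indicator {0<..<d} u * h u) \<in> borel_measurable lborel"
    proof (rule rc_meas)
      fix u \<epsilon> :: real assume "0 < u" "u < d" "0 < \<epsilon>"
      then show "\<exists>\<delta>>0. \<forall>v. u \<le> v \<and> v < u + \<delta> \<longrightarrow> \<bar>h v - h u\<bar> < \<epsilon>"
        unfolding h_def using rcont[OF t s sr] by blast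
    qed
    have ci: "set_integrable lborel {0<..<d} (\<lambda>_. \<bar>c\<bar> + e)"
      using interval_integral_const(1)[of 0 d "\<bar>c\<bar> + e"] d by (simp add: interval_lebesgue_integrable_def)
    have "set_integrable lborel {0<..<d} h"
    proof (rule set_integrable_bound[OF ci])
      show "set_borel_measurable lborel {0<..<d} h" using mb by (simp add: set_borel_measurable_def)
      show "AE x in lborel. x \<in> {0<..<d} \<longrightarrow> norm (h x) \<le> norm (\<bar>c\<bar> + e)"
        using bnd e by (intro AE_I2) (auto, smt (verit) bnd)
    qed
    then have ii: "interval_lebesgue_integrable lborel 0 d h"
      using d by (simp add: interval_lebesgue_integrable_def)
    have "\<bar>(1/d) * (LBINT u=0..d. h u) - c\<bar> \<le> e/2"
      by (rule G[OF _ ii]) (use d bnd in auto)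
    then show "\<bar>(1 / d) * (LBINT u=0..d. measure (\<phi> (t + d - u)) {s + u<..r + u}) - measure (\<phi> t) {s<..r}\<bar> < e"
      using e unfolding h_def c_def by simp
  qed
qed

end

theorem propositionA1:
  fixes \<phi> :: "real \<Rightarrow> real measure"
  assumes meas: "\<And>t. t \<ge> 0 \<Longrightarrow> sets (\<phi> t) = sets borel_nonneg"
    and fin: "\<And>t. t \<ge> 0 \<Longrightarrow> finite_measure (\<phi> t)"
    and cont: "\<And>t A \<epsilon>. t \<ge> 0 \<Longrightarrow> A \<in> sets borel_nonneg \<Longrightarrow> \<epsilon> > 0 \<Longrightarrow>
      \<exists>\<eta>. 0 < \<eta> \<and> \<eta> < 1 \<and>
        (\<forall>z z'. \<bar>z\<bar> < \<eta> \<and> \<bar>z'\<bar> < \<eta> \<and> t + z \<ge> 0 \<longrightarrow>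
           \<bar>measure (\<phi> (t + z)) (translate A z' \<inter> {0..})
             - measure (\<phi> t) (translate A z' \<inter> {0..})\<bar> < \<epsilon>)"
  shows "(AE t in lborel. t \<ge> 0 \<longrightarrow> (\<forall>s r. 0 \<le> s \<and> s < r \<longrightarrow>
            ((\<lambda>d. (1 / d) * (LBINT u=0..d.
                \<bar>measure (\<phi> (t + d - u)) {s + u<..r + u} - measure (\<phi> t) {s + u<..r + u}\<bar>))
              \<longlongrightarrow> 0) (at_right 0)))
       \<and> (AE t in lborel. t \<ge> 0 \<longrightarrow> (\<forall>s r. 0 \<le> s \<and> s < r \<longrightarrow>
            ((\<lambda>d. (1 / d) * (LBINT u=0..d. measure (\<phi> (t + d - u)) {s + u<..r + u}))
              \<longlongrightarrow> measure (\<phi> t) {s<..r}) (at_right 0)))"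
proof (intro conjI AE_I2 impI allI)
  fix t s r :: real assume "t \<ge> 0" "0 \<le> s \<and> s < r"
  then show "((\<lambda>d. (1 / d) * (LBINT u=0..d.
                \<bar>measure (\<phi> (t + d - u)) {s + u<..r + u} - measure (\<phi> t) {s + u<..r + u}\<bar>))
              \<longlongrightarrow> 0) (at_right 0)"
    by (intro part1[OF meas fin cont]) auto
next
  fix t s r :: real assume "t \<ge> 0" "0 \<le> s \<and> s < r"
  then show "((\<lambda>d. (1 / d) * (LBINT u=0..d. measure (\<phi> (t + d - u)) {s + u<..r + u}))
              \<longlongrightarrow> measure (\<phi> t) {s<..r}) (at_right 0)"
    by (intro part2[OF meas fin cont]) auto
qed

end
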